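(* Let $m = p + 12k$ with $k \geq 0$ an integer and $p \in \{11,13,17,19\}$. If $G_{2m}$ admits three type-2 basic sets of dipaths and two type-1 basic sets of dipaths such that all the dipaths and directed cycles appearing in these five sets (32 in total) are pairwise arc-disjoint, then $G_{2m}$ admits a $\vec{C}_m$-factorization.
   Context: Let $m$ be odd. $G_{2m} = \vec{X}(m,\{1,3\}) \wr K^*_2$ is the digraph with vertex set $\{x_a, y_a : a \in \mathbb{Z}_m\}$ whose arcs are: $(u_a, v_b)$ for all $u,v \in \{x,y\}$ and $a,b$ with $b-a \equiv 1$ or $3 \pmod m$, together with $(x_a,y_a)$ and $(y_a,x_a)$ for all $a$. An arc from a vertex with subscript $a$ to one with subscript $b$ has difference equal to the representative of $b-a$ in $\{0,\dots,m-1\}$; a type-$k$ cycle is a directed $m$-cycle whose arc differences sum (as integers) to $km$. $\rho$ sends $x_i\mapsto x_{i+1}$, $y_i\mapsto y_{i+1}$ (mod $m$). For a dipath $P$: $s(P)$, $t(P)$, $\mathrm{len}(P)$ are its first vertex, last vertex and number of arcs; a dipath of length $0$ is a single vertex. $V_0=\{x_j,y_j: 0\le j\le p-1\}$ and $V_i=\{x_j,y_j: p+12(i-1)\le j\le p+12i-1\}$ for $1\le i\le k$. Type-2 basic set: an 8-tuple $(W,X,Y,Z,Q,R,S,T)$ of dipaths with (C1) $Q,R,S,T$ pairwise vertex-disjoint; if $k\ge1$ then $W,X,Y,Z$ pairwise vertex-disjoint, and if $k=0$ then $WX$, $YZ$ are vertex-disjoint type-2 directed cycles; (C2) $s(X)=\rho^{-p}(t(W))$,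 $s(W)=\rho^{-p}(t(X))$, $s(Z)=\rho^{-p}(t(Y))$, $s(Y)=\rho^{-p}(t(Z))$; (C3) $\mathrm{len}(W)+\mathrm{len}(X)=\mathrm{len}(Y)+\mathrm{len}(Z)=p$, and $\mathrm{len}(Q)+\mathrm{len}(R)=\mathrm{len}(S)+\mathrm{len}(T)=12$ if $k\ge1$, all four of length $0$ if $k=0$; (C4) each of $W,X,Y,Z$ has source and internal vertices in $V_0$ and terminal vertex $x_t$ or $y_t$ with $t\in\{p,p+1,p+2\}$; (C5) $t(W)=s(Q)$, $t(X)=s(R)$, $t(Y)=s(S)$, $t(Z)=s(T)$; (C6) if $k\ge1$ and $P\in\{Q,R,S,T\}$ has $s(P)=x_t$ (resp. $y_t$) then $t(P)=x_{t+12}$ (resp. $y_{t+12}$) and all internal vertices of $P$ lie in $V_1$. Type-1 basic set: a 4-tuple $(X,Y,R,S)$ with (C1) $R,S$ vertex-disjoint; if $k\ge1$ then $X,Y$ are vertex-disjoint dipaths, and if $k=0$ they are vertex-disjoint type-1 directed cycles; (C2) $s(X)=\rho^{-p}(t(X))$, $s(Y)=\rho^{-p}(t(Y))$; (C3) $\mathrm{len}(X)=\mathrm{len}(Y)=p$, and $\mathrm{len}(R)=\mathrm{len}(S)=12$ if $k\ge1$, $0$ if $k=0$; (C4) each of $X,Y$ has source and internal vertices in $V_0$ and terminal vertex $x_t$ or $y_t$ with $t\in\{p,p+1,p+2\}$; (C5) $t(X)=s(R)$, $t(Y)=s(S)$; (C6) if $k\ge1$ and $P\in\{R,S\}$ has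 $s(P)=x_t$ (resp. $y_t$) then $t(P)=x_{t+12}$ (resp. $y_{t+12}$) and all internal vertices of $P$ lie in $V_1$. A $\vec{C}_m$-factor is a spanning subdigraph that is a disjoint union of directed $m$-cycles; a $\vec{C}_m$-factorization is a partition of the arc set into $\vec{C}_m$-factors. *)

theory Defs
  imports Main
begin

text \<open>Vertices of G_{2m}: (False, a) is x_a and (True, a) is y_a, with subscript a < m
  representing an element of Z_m.\<close>

type_synonym vtx = "bool \<times> nat"

definition verts :: "nat \<Rightarrow> vtx set" where
  "verts m = UNIV \<times> {..<m}"

text \<open>Arc set of G_{2m} = X(m,{1,3}) wr K_2^*.\<close>
definition G_arcs :: "nat \<Rightarrow> (vtx \<times> vtx) set" where
  "G_arcs m = {((u,a),(v,b)). a < m \<and> b < m \<and>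
      (b = (a + 1) mod m \<or> b = (a + 3) mod m \<or> (u \<noteq> v \<and> a = b))}"

definition shift :: "nat \<Rightarrow> int \<Rightarrow> vtx \<Rightarrow> vtx" where
  "shift m d v = (fst v, nat ((int (snd v) + d) mod int m))"

definition rho :: "nat \<Rightarrow> vtx \<Rightarrow> vtx" where
  "rho m = shift m 1"

definition arc_diff :: "nat \<Rightarrow> vtx \<Rightarrow> vtx \<Rightarrow> nat" where
  "arc_diff m u v = (snd v + m - snd u) mod m"

definition walk :: "nat \<Rightarrow> vtx list \<Rightarrow> bool" where
  "walk m P \<longleftrightarrow> P \<noteq> [] \<and> set P \<subseteq> verts m \<and>
     (\<forall>i. Suc i < length P \<longrightarrow> (P ! i, P ! Suc i) \<in> G_arcs m)"

definition dipath :: "nat \<Rightarrow> vtx list \<Rightarrow> bool" where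
  "dipath m P \<longleftrightarrow> walk m P \<and> distinct P"

definition src :: "vtx list \<Rightarrow> vtx" where "src P = hd P"
definition tgt :: "vtx list \<Rightarrow> vtx" where "tgt P = last P"
definition len :: "vtx list \<Rightarrow> nat" where "len P = length P - 1"
definition internal :: "vtx list \<Rightarrow> vtx set" where "internal P = set (butlast (tl P))"
definition walk_arcs :: "vtx list \<Rightarrow> (vtx \<times> vtx) set" where
  "walk_arcs P = set (zip P (tl P))"

definition dicycle :: "nat \<Rightarrow> vtx list \<Rightarrow> bool" where
  "dicycle m C \<longleftrightarrow> length C = m \<and> distinct C \<and> set C \<subseteq> verts m \<and>
     (\<forall>i<m. (C ! i, C ! (Suc i mod m)) \<in> G_arcs m)"

definition cyc_arcs :: "vtx list \<Rightarrow> (vtx \<times> vtx) set" where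
  "cyc_arcs C = {(C ! i, C ! (Suc i mod length C)) | i. i < length C}"

definition cycle_of_type :: "nat \<Rightarrow> nat \<Rightarrow> vtx list \<Rightarrow> bool" where
  "cycle_of_type m j C \<longleftrightarrow> dicycle m C \<and>
     (\<Sum>i<length C. arc_diff m (C ! i) (C ! (Suc i mod length C))) = j * m"

definition closed_walk_type :: "nat \<Rightarrow> nat \<Rightarrow> vtx list \<Rightarrow> bool" where
  "closed_walk_type m j P \<longleftrightarrow> walk m P \<and> hd P = last P \<and> cycle_of_type m j (butlast P)"

definition V0 :: "nat \<Rightarrow> vtx set" where "V0 p = {v. snd v < p}"
definition V1 :: "nat \<Rightarrow> vtx set" where "V1 p = {v. p \<le> snd v \<and> snd v \<le> p + 11}"

definition C4 :: "nat \<Rightarrow> nat \<Rightarrow> vtx list \<Rightarrow> bool" where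
  "C4 m p P \<longleftrightarrow> set (butlast P) \<subseteq> V0 p \<and> (\<exists>i\<le>2. snd (tgt P) = (p + i) mod m)"

definition C6 :: "nat \<Rightarrow> nat \<Rightarrow> vtx list \<Rightarrow> bool" where
  "C6 m p P \<longleftrightarrow> tgt P = shift m 12 (src P) \<and> internal P \<subseteq> V1 p"

definition type2_basic :: "nat \<Rightarrow> nat \<Rightarrow> nat \<Rightarrow> vtx list list \<Rightarrow> bool" where
  "type2_basic m p k B \<longleftrightarrow> length B = 8 \<and> (\<forall>P\<in>set B. dipath m P) \<and>
    (let W = B!0; X = B!1; Y = B!2; Z = B!3; Q = B!4; R = B!5; S = B!6; T = B!7 in
     \<comment> \<open>C1\<close>
     (\<forall>i\<in>{4..7}. \<forall>j\<in>{4..7}. i \<noteq> j \<longrightarrow> set (B!i) \<inter> set (B!j) = {}) \<and>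
     (k \<ge> 1 \<longrightarrow> (\<forall>i<4. \<forall>j<4. i \<noteq> j \<longrightarrow> set (B!i) \<inter> set (B!j) = {})) \<and>
     (k = 0 \<longrightarrow> closed_walk_type m 2 (W @ tl X) \<and> closed_walk_type m 2 (Y @ tl Z) \<and>
               (set W \<union> set X) \<inter> (set Y \<union> set Z) = {}) \<and>
     \<comment> \<open>C2\<close>
     src X = shift m (- int p) (tgt W) \<and> src W = shift m (- int p) (tgt X) \<and>
     src Z = shift m (- int p) (tgt Y) \<and> src Y = shift m (- int p) (tgt Z) \<and>
     \<comment> \<open>C3\<close>
     len W + len X = p \<and> len Y + len Z = p \<and>
     (k \<ge> 1 \<longrightarrow> len Q + len R = 12 \<and> len S + len T = 12) \<and>
     (k = 0 \<longrightarrow> len Q = 0 \<and> len R = 0 \<and> len S = 0 \<and> len T = 0) \<and>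
     \<comment> \<open>C4\<close>
     C4 m p W \<and> C4 m p X \<and> C4 m p Y \<and> C4 m p Z \<and>
     \<comment> \<open>C5\<close>
     tgt W = src Q \<and> tgt X = src R \<and> tgt Y = src S \<and> tgt Z = src T \<and>
     \<comment> \<open>C6\<close>
     (k \<ge> 1 \<longrightarrow> C6 m p Q \<and> C6 m p R \<and> C6 m p S \<and> C6 m p T))"

definition type1_basic :: "nat \<Rightarrow> nat \<Rightarrow> nat \<Rightarrow> vtx list list \<Rightarrow> bool" where
  "type1_basic m p k B \<longleftrightarrow> length B = 4 \<and>
    (let X = B!0; Y = B!1; R = B!2; S = B!3 in
     \<comment> \<open>C1\<close>
     dipath m R \<and> dipath m S \<and> set R \<inter> set S = {} \<and>
     (k \<ge> 1 \<longrightarrow> dipath m X \<and> dipath m Y \<and> set X \<inter> set Y = {}) \<and>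
     (k = 0 \<longrightarrow> closed_walk_type m 1 X \<and> closed_walk_type m 1 Y \<and> set X \<inter> set Y = {}) \<and>
     \<comment> \<open>C2\<close>
     src X = shift m (- int p) (tgt X) \<and> src Y = shift m (- int p) (tgt Y) \<and>
     \<comment> \<open>C3\<close>
     len X = p \<and> len Y = p \<and>
     (k \<ge> 1 \<longrightarrow> len R = 12 \<and> len S = 12) \<and>
     (k = 0 \<longrightarrow> len R = 0 \<and> len S = 0) \<and>
     \<comment> \<open>C4\<close>
     C4 m p X \<and> C4 m p Y \<and>
     \<comment> \<open>C5\<close>
     tgt X = src R \<and> tgt Y = src S \<and>
     \<comment> \<open>C6\<close>
     (k \<ge> 1 \<longrightarrow> C6 m p R \<and> C6 m p S))"

definition Cm_factor :: "nat \<Rightarrow> (vtx \<times> vtx) set \<Rightarrow> bool" where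
  "Cm_factor m A \<longleftrightarrow> (\<exists>Cs. (\<forall>C\<in>Cs. dicycle m C) \<and>
      (\<forall>C\<in>Cs. \<forall>C'\<in>Cs. C \<noteq> C' \<longrightarrow> set C \<inter> set C' = {}) \<and>
      (\<Union>C\<in>Cs. set C) = verts m \<and> (\<Union>C\<in>Cs. cyc_arcs C) = A)"

definition Cm_factorization :: "nat \<Rightarrow> bool" where
  "Cm_factorization m \<longleftrightarrow> (\<exists>F. (\<forall>A\<in>F. Cm_factor m A) \<and>
      (\<forall>A\<in>F. \<forall>B\<in>F. A \<noteq> B \<longrightarrow> A \<inter> B = {}) \<and> \<Union>F = G_arcs m)"

end

theory Submission
  imports Defs
begin


lemma walk_arcs_nth: "walk_arcs P = {(P!i, P!Suc i) | i. Suc i < length P}"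
  unfolding walk_arcs_def set_zip by (auto simp: nth_tl)

lemma walk_alt: "walk m P \<longleftrightarrow> P \<noteq> [] \<and> set P \<subseteq> verts m \<and> walk_arcs P \<subseteq> G_arcs m"
  unfolding walk_def walk_arcs_nth by blast

lemma walk_arcs_Nil[simp]: "walk_arcs [] = {}" and walk_arcs_single[simp]: "walk_arcs [a] = {}"
  and walk_arcs_Cons2[simp]: "walk_arcs (a # b # zs) = insert (a,b) (walk_arcs (b # zs))"
  by (auto simp: walk_arcs_def)

definition join :: "'a list \<Rightarrow> 'a list \<Rightarrow> 'a list" where "join xs ys = xs @ tl ys"

lemma walk_arcs_join: "xs \<noteq> [] \<Longrightarrow> ys \<noteq> [] \<Longrightarrow> last xs = hd ys \<Longrightarrow>
   walk_arcs (join xs ys) = walk_arcs xs \<union> walk_arcs ys"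
proof (induction xs rule: induct_list012)
  case 1 then show ?case by simp
next
  case (2 x) then show ?case by (cases ys) (auto simp: join_def)
next
  case (3 a b zs)
  have e: "join (a#b#zs) ys = a # b # join zs ys" by (simp add: join_def)
  have "walk_arcs (join (b#zs) ys) = walk_arcs (b#zs) \<union> walk_arcs ys" using 3 by simp
  moreover have "join (b#zs) ys = b # join zs ys" by (simp add: join_def)
  ultimately show ?case unfolding e by simp
qed

lemma join_basic:
  assumes "xs \<noteq> []" "ys \<noteq> []" "last xs = hd ys"
  shows "join xs ys \<noteq> []" "hd (join xs ys) = hd xs" "last (join xs ys) = last ys"
    "butlast (join xs ys) = butlast xs @ butlast ys"
    "set (join xs ys) = set xs \<union> set ys"
    "length (join xs ys) = length xs + length ys - 1"
proof -
  obtain y ys' where ys: "ys = y # ys'" using assms(2) by (cases ys) auto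
  have xs: "butlast xs @ [y] = xs" using assms ys append_butlast_last_id[of xs] by simp
  show "join xs ys \<noteq> []" "hd (join xs ys) = hd xs" using assms by (auto simp: join_def)
  show "last (join xs ys) = last ys" using assms ys by (cases ys') (auto simp: join_def)
  have J: "join xs ys = butlast xs @ ys"
  proof -
    have "butlast xs @ ys = (butlast xs @ [y]) @ ys'" using ys by simp
    then show ?thesis using xs ys by (simp add: join_def)
  qed
  show "butlast (join xs ys) = butlast xs @ butlast ys"
    unfolding J using assms(2) by (simp add: butlast_append)
  have "set xs = set (butlast xs) \<union> {y}" using arg_cong[OF xs, of set] by auto
  then show "set (join xs ys) = set xs \<union> set ys" unfolding J using ys by auto
  show "length (join xs ys) = length xs + length ys - 1" using assms by (cases ys) (simp_all add: join_def)
qed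

lemma walk_join: "walk m xs \<Longrightarrow> walk m ys \<Longrightarrow> last xs = hd ys \<Longrightarrow> walk m (join xs ys)"
proof -
  assume a: "walk m xs" "walk m ys" "last xs = hd ys"
  then have ne: "xs \<noteq> []" "ys \<noteq> []" by (auto simp: walk_def)
  show ?thesis using a unfolding walk_alt
    using walk_arcs_join[OF ne a(3)] join_basic(1,5)[OF ne a(3)] by auto
qed

lemma len_join: "xs \<noteq> [] \<Longrightarrow> ys \<noteq> [] \<Longrightarrow> last xs = hd ys \<Longrightarrow> len (join xs ys) = len xs + len ys"
  using join_basic(6)[of xs ys] by (cases xs; cases ys) (auto simp: len_def)

lemma walk_arcs_map: "walk_arcs (map f P) = (\<lambda>(a,b). (f a, f b)) ` walk_arcs P"
  unfolding walk_arcs_def by (simp add: map_tl[symmetric] zip_map_map)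

lemma shift_fst[simp]: "fst (shift m d v) = fst v" by (simp add: shift_def)

lemma shift_snd_lt: "0 < m \<Longrightarrow> snd (shift m d v) < m"
  by (simp add: shift_def nat_less_iff)

lemma shift_verts: "0 < m \<Longrightarrow> shift m d v \<in> verts m"
  using shift_snd_lt[of m d v] by (cases "shift m d v") (auto simp: verts_def)

lemma int_snd_shift: "0 < m \<Longrightarrow> int (snd (shift m d v)) = (int (snd v) + d) mod int m"
  by (simp add: shift_def)

lemma shift_eqI: "fst u = fst v \<Longrightarrow> int (snd u) = int (snd v) \<Longrightarrow> u = v"
  by (simp add: prod_eq_iff)

lemma shift_shift: "0 < m \<Longrightarrow> shift m a (shift m b v) = shift m (a+b) v"
  by (rule shift_eqI) (simp_all add: int_snd_shift mod_simps add.assoc add.commute[of a b])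

lemma shift_id: "v \<in> verts m \<Longrightarrow> d mod int m = 0 \<Longrightarrow> shift m d v = v"
proof -
  assume v: "v \<in> verts m" and d: "d mod int m = 0"
  then have m: "0 < m" "snd v < m" by (auto simp: verts_def)
  show ?thesis
  proof (rule shift_eqI)
    show "int (snd (shift m d v)) = int (snd v)" unfolding int_snd_shift[OF m(1)]
      using m d by (simp add: mod_add_right_eq[symmetric])
  qed simp
qed

lemma shift_inj: "u \<in> verts m \<Longrightarrow> v \<in> verts m \<Longrightarrow> shift m d u = shift m d v \<Longrightarrow> u = v"
proof -
  assume u: "u \<in> verts m" and v: "v \<in> verts m" and e: "shift m d u = shift m d v"
  then have m: "0 < m" by (auto simp: verts_def)
  have "shift m (-d) (shift m d u) = shift m (-d) (shift m d v)" using e by simp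
  then show ?thesis using shift_shift[OF m] shift_id[OF u] shift_id[OF v] by simp
qed

lemma shift_snd_add: "snd v + n < m \<Longrightarrow> snd (shift m (int n) v) = snd v + n"
  by (simp add: shift_def)

lemma shift_G: assumes m: "0 < m" and e: "(u,v) \<in> G_arcs m"
  shows "(shift m d u, shift m d v) \<in> G_arcs m"
proof -
  obtain a s b t where uv: "u = (a,s)" "v = (b,t)" by (cases u, cases v)
  have st: "s < m" "t < m" "t = (s+1) mod m \<or> t = (s+3) mod m \<or> (a \<noteq> b \<and> s = t)"
    using e uv by (auto simp: G_arcs_def)
  define s' where "s' = snd (shift m d u)"
  define t' where "t' = snd (shift m d v)"
  have is': "int s' = (int s + d) mod int m" using uv by (simp add: s'_def int_snd_shift[OF m])
  have it': "int t' = (int t + d) mod int m" using uv by (simp add: t'_def int_snd_shift[OF m])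
  have "t' = (s'+1) mod m \<or> t' = (s'+3) mod m \<or> (a \<noteq> b \<and> s' = t')"
  proof -
    { assume "t = (s+1) mod m"
      then have "int t = (int s + 1) mod int m" by (simp add: zmod_int add.commute)
      then have "int t' = int ((s'+1) mod m)" using is' it' by (simp add: zmod_int mod_simps algebra_simps)
      then have "t' = (s'+1) mod m" by linarith }
    moreover
    { assume "t = (s+3) mod m"
      then have "int t = (int s + 3) mod int m" by (simp add: zmod_int add.commute)
      then have "int t' = int ((s'+3) mod m)" using is' it' by (simp add: zmod_int mod_simps algebra_simps)
      then have "t' = (s'+3) mod m" by linarith }
    moreover
    { assume "a \<noteq> b \<and> s = t"
      then have "a \<noteq> b \<and> s' = t'" using is' it' by simp }
    ultimately show ?thesis using st by blast
  qed
  moreover have "s' < m" "t' < m" using shift_snd_lt[OF m] s'_def t'_def by auto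
  moreover have "shift m d u = (a, s')" "shift m d v = (b, t')" using uv
    unfolding s'_def t'_def by (simp_all add: prod_eq_iff)
  ultimately show ?thesis unfolding G_arcs_def by auto
qed

lemma walk_shift: assumes "0 < m" "walk m P" shows "walk m (map (shift m d) P)"
  using assms unfolding walk_alt walk_arcs_map
  apply (auto intro: shift_verts)
  using shift_G[OF assms(1)] by blast

lemma closed_cycle:
  assumes w: "walk m Wc" and hl: "hd Wc = last Wc" and l: "len Wc = m" and d: "distinct (butlast Wc)"
    and m: "0 < m"
  shows "dicycle m (butlast Wc)" "cyc_arcs (butlast Wc) = walk_arcs Wc"
proof -
  define C where "C = butlast Wc"
  have ne: "Wc \<noteq> []" using w by (simp add: walk_def)
  have L: "length Wc = Suc m" using l m ne by (simp add: len_def)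
  have LC: "length C = m" using L by (simp add: C_def)
  have "Wc = C @ [last Wc]" using ne by (simp add: C_def)
  moreover have "hd Wc = C ! 0" using LC m ne C_def by (metis hd_conv_nth length_greater_0_conv nth_butlast)
  ultimately have WC: "Wc = C @ [C ! 0]" using hl by simp
  have nth: "Wc ! i = C ! i \<and> Wc ! Suc i = C ! (Suc i mod m)" if "i < m" for i
  proof -
    have "Wc ! i = C ! i" using that LC by (subst WC) (simp add: nth_append)
    moreover have "Wc ! Suc i = C ! (Suc i mod m)"
    proof (cases "Suc i < m")
      case True then show ?thesis using LC by (subst WC) (simp add: nth_append)
    next
      case False then have "Suc i = m" using that by simp
      then show ?thesis using LC by (subst WC) (simp add: nth_append)
    qed
    ultimately show ?thesis by simp
  qed
  have arcs: "\<forall>i. Suc i < length Wc \<longrightarrow> (Wc ! i, Wc ! Suc i) \<in> G_arcs m" and sv: "set Wc \<subseteq> verts m"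
    using w by (auto simp: walk_def)
  show "dicycle m (butlast Wc)" unfolding dicycle_def C_def[symmetric]
  proof (intro conjI allI impI)
    show "length C = m" by (rule LC)
    show "distinct C" using d C_def by simp
    show "set C \<subseteq> verts m" using sv C_def by (meson in_set_butlastD subset_iff)
    fix i assume "i < m"
    then show "(C ! i, C ! (Suc i mod m)) \<in> G_arcs m" using arcs nth L by fastforce
  qed
  have "cyc_arcs C = {(Wc!i, Wc!Suc i) | i. i < m}" unfolding cyc_arcs_def LC
    using nth by (smt (verit, best) Collect_cong)
  also have "\<dots> = walk_arcs Wc" unfolding walk_arcs_nth L by simp
  finally show "cyc_arcs (butlast Wc) = walk_arcs Wc" by (simp add: C_def)
qed

fun rep :: "nat \<Rightarrow> vtx list \<Rightarrow> nat \<Rightarrow> vtx list" where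
  "rep m P 0 = [hd P]"
| "rep m P (Suc s) = join (rep m P s) (map (shift m (int (12*s))) P)"

lemma walk_arcs_tail: "(a,b) \<in> walk_arcs P \<Longrightarrow> a \<in> set (butlast P) \<and> b \<in> set P"
proof -
  assume "(a,b) \<in> walk_arcs P"
  then obtain i where i: "a = P!i" "b = P!Suc i" "Suc i < length P" unfolding walk_arcs_nth by auto
  then have "a = butlast P ! i" "i < length (butlast P)" by (auto simp: nth_butlast)
  then show ?thesis using i by (metis nth_mem)
qed

definition blockP :: "nat \<Rightarrow> nat \<Rightarrow> vtx list \<Rightarrow> bool" where
  "blockP m p P \<longleftrightarrow> walk m P \<and> distinct P \<and> last P = shift m 12 (hd P) \<and>
     (\<forall>v\<in>set (butlast P). p \<le> snd v \<and> snd v \<le> p + 11)"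

lemma rep_basic:
  assumes m: "0 < m" and b: "blockP m p P"
  shows "walk m (rep m P s) \<and> hd (rep m P s) = hd P \<and> last (rep m P s) = shift m (int (12*s)) (hd P)
     \<and> len (rep m P s) = s * len P
     \<and> walk_arcs (rep m P s) = (\<Union>t<s. (\<lambda>(a,b). (shift m (int (12*t)) a, shift m (int (12*t)) b)) ` walk_arcs P)
     \<and> set (butlast (rep m P s)) = (\<Union>t<s. shift m (int (12*t)) ` set (butlast P))"
proof (induction s)
  case 0
  have w: "walk m P" "P \<noteq> []" using b by (auto simp: blockP_def walk_def)
  then have "hd P \<in> verts m" by (auto simp: walk_def)
  then show ?case using w by (auto simp: walk_def len_def shift_id)
next
  case (Suc s)
  have w: "walk m P" "P \<noteq> []" and lP: "last P = shift m 12 (hd P)" using b by (auto simp: blockP_def walk_def)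
  let ?Q = "map (shift m (int (12*s))) P"
  have wq: "walk m ?Q" by (rule walk_shift[OF m w(1)])
  have ne: "rep m P s \<noteq> []" "?Q \<noteq> []" using Suc.IH w by (auto simp: walk_def)
  have lk: "last (rep m P s) = hd ?Q" using Suc.IH w by (simp add: hd_map)
  have lQ: "last ?Q = shift m (int (12 * Suc s)) (hd P)" using w lP by (simp add: last_map shift_shift[OF m] add.commute)
  have IH: "walk m (rep m P s)" "hd (rep m P s) = hd P" "len (rep m P s) = s * len P"
     "walk_arcs (rep m P s) = (\<Union>t<s. (\<lambda>(a,b). (shift m (int (12*t)) a, shift m (int (12*t)) b)) ` walk_arcs P)"
     "set (butlast (rep m P s)) = (\<Union>t<s. shift m (int (12*t)) ` set (butlast P))"
    using Suc.IH by blast+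
  have "rep m P (Suc s) = join (rep m P s) ?Q" by simp
  note J = join_basic[OF ne lk]
  have 1: "walk m (rep m P (Suc s))" using walk_join[OF IH(1) wq lk] by simp
  have 2: "hd (rep m P (Suc s)) = hd P" using J(2) IH(2) by simp
  have 3: "last (rep m P (Suc s)) = shift m (int (12 * Suc s)) (hd P)" using J(3) lQ by simp
  have "len ?Q = len P" by (simp add: len_def)
  then have 4: "len (rep m P (Suc s)) = Suc s * len P" using len_join[OF ne lk] IH(3) by simp
  have 5: "walk_arcs (rep m P (Suc s)) = (\<Union>t<Suc s. (\<lambda>(a,b). (shift m (int (12*t)) a, shift m (int (12*t)) b)) ` walk_arcs P)"
    using walk_arcs_join[OF ne lk] IH(4) by (simp add: walk_arcs_map lessThan_Suc Un_commute)
  have 6: "set (butlast (rep m P (Suc s))) = (\<Union>t<Suc s. shift m (int (12*t)) ` set (butlast P))"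
    using J(4) IH(5) by (simp add: lessThan_Suc map_butlast[symmetric] Un_commute)
  show ?case using 1 2 3 4 5 6 by blast
qed

lemma blockP_snd: "blockP m p P \<Longrightarrow> p + 12 * s \<le> m \<Longrightarrow> u \<in> set (butlast P) \<Longrightarrow> t < s \<Longrightarrow>
   snd (shift m (int (12*t)) u) = snd u + 12 * t"
  unfolding blockP_def by (intro shift_snd_add) (fastforce)

lemma blockP_verts: "blockP m p P \<Longrightarrow> u \<in> set P \<Longrightarrow> u \<in> verts m"
  unfolding blockP_def walk_def by blast

lemma rep_elem:
  assumes m: "0 < m" and b: "blockP m p P" and s: "p + 12 * s \<le> m" and v: "v \<in> set (butlast (rep m P s))"
  shows "\<exists>t<s. \<exists>u\<in>set (butlast P). v = shift m (int (12*t)) u \<and> snd v = snd u + 12 * t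
     \<and> p + 12 * t \<le> snd v \<and> snd v \<le> p + 11 + 12 * t"
proof -
  obtain t u where tu: "t < s" "u \<in> set (butlast P)" "v = shift m (int (12*t)) u"
    using v rep_basic[OF m b, of s] by auto
  have "snd v = snd u + 12 * t" using blockP_snd[OF b s tu(2,1)] tu(3) by simp
  moreover have "p \<le> snd u" "snd u \<le> p + 11" using b tu(2) by (auto simp: blockP_def)
  ultimately have "snd v = snd u + 12 * t" "p + 12 * t \<le> snd v" "snd v \<le> p + 11 + 12 * t" by linarith+
  then show ?thesis using tu(1,2,3) by blast
qed

lemma rep_elem_range:
  assumes "0 < m" "blockP m p P" "p + 12 * s \<le> m" "v \<in> set (butlast (rep m P s))"
  shows "p \<le> snd v \<and> snd v < p + 12 * s"
proof -
  obtain t where "t < s" "p + 12 * t \<le> snd v" "snd v \<le> p + 11 + 12 * t" using rep_elem[OF assms] by blast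
  then show ?thesis by linarith
qed

lemma rep_disj_gen:
  assumes m: "0 < m" and b: "blockP m p P" and b': "blockP m p P'" and s: "p + 12 * s \<le> m"
    and v: "v \<in> set (butlast (rep m P s))" and v': "v \<in> set (butlast (rep m P' s'))" and s': "p + 12 * s' \<le> m"
  shows "\<exists>u\<in>set (butlast P). u \<in> set (butlast P')"
proof -
  obtain t u where tu: "t < s" "u \<in> set (butlast P)" "v = shift m (int (12*t)) u" "snd v = snd u + 12 * t"
    "p + 12 * t \<le> snd v" "snd v \<le> p + 11 + 12 * t" using rep_elem[OF m b s v] by blast
  obtain t' u' where tu': "t' < s'" "u' \<in> set (butlast P')" "v = shift m (int (12*t')) u'" "snd v = snd u' + 12 * t'"
    "p + 12 * t' \<le> snd v" "snd v \<le> p + 11 + 12 * t'" using rep_elem[OF m b' s' v'] by blast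
  have "t = t'" using tu tu' by linarith
  then have "u = u'" using tu(3) tu'(3) shift_inj blockP_verts[OF b] blockP_verts[OF b'] tu(2) tu'(2)
    by (metis in_set_butlastD)
  then show ?thesis using tu(2) tu'(2) by blast
qed

lemma rep_distinct:
  assumes m: "0 < m" and b: "blockP m p P"
  shows "p + 12 * s \<le> m \<Longrightarrow> distinct (butlast (rep m P s))"
proof (induction s)
  case 0 then show ?case by simp
next
  case (Suc s)
  have w: "P \<noteq> []" "distinct P" using b by (auto simp: blockP_def walk_def)
  let ?Q = "map (shift m (int (12*s))) P"
  have ne: "rep m P s \<noteq> []" "?Q \<noteq> []" using w rep_basic[OF m b, of s] by (auto simp: walk_def)
  have lk: "last (rep m P s) = hd ?Q" using rep_basic[OF m b, of s] w by (simp add: hd_map)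
  have e: "butlast (rep m P (Suc s)) = butlast (rep m P s) @ map (shift m (int (12*s))) (butlast P)"
    using join_basic(4)[OF ne lk] by (simp add: map_butlast)
  have d1: "distinct (butlast (rep m P s))" using Suc by simp
  have d2: "distinct (map (shift m (int (12*s))) (butlast P))"
    using w(2) blockP_verts[OF b] shift_inj unfolding distinct_map
    by (metis distinct_butlast in_set_butlastD inj_onI)
  have d3: "set (butlast (rep m P s)) \<inter> shift m (int (12*s)) ` set (butlast P) = {}"
  proof (rule ccontr)
    assume "\<not> ?thesis"
    then obtain v u where "v \<in> set (butlast (rep m P s))" "u \<in> set (butlast P)" "v = shift m (int (12*s)) u" by blast
    moreover have "p + 12 * s \<le> m" using Suc.prems by simp
    ultimately have "snd v < p + 12 * s" "snd v = snd u + 12 * s" "p \<le> snd u"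
      using rep_elem_range[OF m b] blockP_snd[OF b Suc.prems, of u s] b unfolding blockP_def by blast+
    then show False by linarith
  qed
  show ?case unfolding e using d1 d2 d3 by simp
qed

lemma rep_arcs_elem:
  assumes m: "0 < m" and b: "blockP m p P" and s: "p + 12 * s \<le> m" and e: "(a,c) \<in> walk_arcs (rep m P s)"
  shows "\<exists>t<s. \<exists>a' c'. (a',c') \<in> walk_arcs P \<and> a = shift m (int (12*t)) a' \<and> c = shift m (int (12*t)) c'
     \<and> p + 12 * t \<le> snd a \<and> snd a \<le> p + 11 + 12 * t"
proof -
  obtain t a' c' where tu: "t < s" "(a',c') \<in> walk_arcs P" "a = shift m (int (12*t)) a'" "c = shift m (int (12*t)) c'"
    using e rep_basic[OF m b, of s] by auto
  have a': "a' \<in> set (butlast P)" using walk_arcs_tail[OF tu(2)] by simp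
  have "snd a = snd a' + 12 * t" using blockP_snd[OF b s a' tu(1)] tu(3) by simp
  moreover have "p \<le> snd a'" "snd a' \<le> p + 11" using b a' by (auto simp: blockP_def)
  ultimately have "p + 12 * t \<le> snd a" "snd a \<le> p + 11 + 12 * t" by linarith+
  then show ?thesis using tu(1,2,3,4) by blast
qed

lemma rep_arcs_disj:
  assumes m: "0 < m" and b: "blockP m p P" and b': "blockP m p P'" and s: "p + 12 * s \<le> m"
    and d: "walk_arcs P \<inter> walk_arcs P' = {}"
  shows "walk_arcs (rep m P s) \<inter> walk_arcs (rep m P' s) = {}"
proof (rule ccontr)
  assume "\<not> ?thesis"
  then obtain a c where e: "(a,c) \<in> walk_arcs (rep m P s)" "(a,c) \<in> walk_arcs (rep m P' s)" by auto
  obtain t a1 c1 where 1: "t<s" "(a1,c1) \<in> walk_arcs P" "a = shift m (int (12*t)) a1" "c = shift m (int (12*t)) c1"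
     "p + 12 * t \<le> snd a" "snd a \<le> p + 11 + 12 * t" using rep_arcs_elem[OF m b s e(1)] by blast
  obtain t' a2 c2 where 2: "t'<s" "(a2,c2) \<in> walk_arcs P'" "a = shift m (int (12*t')) a2" "c = shift m (int (12*t')) c2"
     "p + 12 * t' \<le> snd a" "snd a \<le> p + 11 + 12 * t'" using rep_arcs_elem[OF m b' s e(2)] by blast
  have "t = t'" using 1 2 by linarith
  moreover have "a1 \<in> verts m" "c1 \<in> verts m" using walk_arcs_tail[OF 1(2)] blockP_verts[OF b] by (metis in_set_butlastD)+
  moreover have "a2 \<in> verts m" "c2 \<in> verts m" using walk_arcs_tail[OF 2(2)] blockP_verts[OF b'] by (metis in_set_butlastD)+
  ultimately have "a1 = a2" "c1 = c2" using 1 2 shift_inj by metis+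
  then show False using 1(2) 2(2) d by auto
qed

lemma mod_small: fixes a m d :: nat assumes "a < m" "d \<le> m" shows "(a + d) mod m = (if a + d < m then a + d else a + d - m)"
proof (cases "a + d < m")
  case False
  have "a + d - m < m" using assms by linarith
  then show ?thesis using False by (simp add: le_mod_geq)
qed simp

definition outn :: "nat \<Rightarrow> vtx \<Rightarrow> vtx set" where
  "outn m v = {(\<not> fst v, snd v), (False, (snd v + 1) mod m), (True, (snd v + 1) mod m),
     (False, (snd v + 3) mod m), (True, (snd v + 3) mod m)}"

lemma card_outn: assumes "4 \<le> m" "snd v < m" shows "card (outn m v) = 5"
proof -
  obtain u a where v: "v = (u,a)" by (cases v)
  have a: "a < m" using assms v by simp
  have "(a+1) mod m \<noteq> a" "(a+3) mod m \<noteq> a" "(a+1) mod m \<noteq> (a+3) mod m"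
    using mod_small[OF a, of 1] mod_small[OF a, of 3] assms a by (auto split: if_splits)
  then show ?thesis unfolding outn_def v by auto
qed

lemma G_Sigma: "G_arcs m = Sigma (verts m) (outn m)"
proof -
  have "x \<in> G_arcs m \<longleftrightarrow> x \<in> Sigma (verts m) (outn m)" for x
  proof -
    obtain u a v b where x: "x = ((u,a),(v,b))" by (metis prod.exhaust)
    show ?thesis unfolding x G_arcs_def verts_def outn_def
      by (cases "0 < m"; cases u; cases v) auto
  qed
  then show ?thesis by blast
qed

lemma card_verts: "card (verts m) = 2 * m" unfolding verts_def by (simp add: card_cartesian_product)

lemma finite_verts: "finite (verts m)" unfolding verts_def by simp

lemma card_G: assumes "4 \<le> m" shows "card (G_arcs m) = 10 * m" "finite (G_arcs m)"
proof -
  have "card (G_arcs m) = (\<Sum>v\<in>verts m. card (outn m v))" unfolding G_Sigma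
    by (rule card_SigmaI) (auto simp: finite_verts outn_def)
  also have "\<dots> = (\<Sum>v\<in>verts m. 5)" using card_outn[OF assms] by (intro sum.cong) (auto simp: verts_def)
  finally show "card (G_arcs m) = 10 * m" by (simp add: card_verts)
  show "finite (G_arcs m)" unfolding G_Sigma by (auto simp: finite_verts outn_def)
qed

lemma card_cyc_arcs: assumes "dicycle m C" shows "card (cyc_arcs C) = m"
proof -
  have l: "length C = m" and d: "distinct C" using assms by (auto simp: dicycle_def)
  have "cyc_arcs C = (\<lambda>i. (C ! i, C ! (Suc i mod m))) ` {..<m}" unfolding cyc_arcs_def l by auto
  moreover have "inj_on (\<lambda>i. (C ! i, C ! (Suc i mod m))) {..<m}"
    using d l by (auto intro!: inj_onI simp: nth_eq_iff_index_eq)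
  ultimately show ?thesis by (simp add: card_image)
qed

lemma cyc_arcs_G: "dicycle m C \<Longrightarrow> cyc_arcs C \<subseteq> G_arcs m"
  unfolding dicycle_def cyc_arcs_def by auto

lemma assemble:
  fixes Cy :: "nat \<Rightarrow> vtx list"
  assumes m: "4 \<le> m"
    and cyc: "\<And>j. j < 10 \<Longrightarrow> dicycle m (Cy j)"
    and vd: "\<And>i. i < 5 \<Longrightarrow> set (Cy (2*i)) \<inter> set (Cy (2*i+1)) = {}"
    and ad: "\<And>j j'. j < 10 \<Longrightarrow> j' < 10 \<Longrightarrow> j \<noteq> j' \<Longrightarrow> cyc_arcs (Cy j) \<inter> cyc_arcs (Cy j') = {}"
  shows "Cm_factorization m"
proof -
  define A where "A i = cyc_arcs (Cy (2*i)) \<union> cyc_arcs (Cy (2*i+1))" for i :: nat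
  have fin: "finite (cyc_arcs (Cy j))" if "j < 10" for j
    using card_cyc_arcs[OF cyc[OF that]] m card_G(2)[OF m] cyc_arcs_G[OF cyc[OF that]] finite_subset by blast
  have cardA: "card (A i) = 2 * m" if "i < 5" for i
  proof -
    have "card (A i) = card (cyc_arcs (Cy (2*i))) + card (cyc_arcs (Cy (2*i+1)))"
      unfolding A_def using that by (intro card_Un_disjoint fin ad) auto
    then show ?thesis using card_cyc_arcs[OF cyc[of "2*i"]] card_cyc_arcs[OF cyc[of "2*i+1"]] that by simp
  qed
  have facA: "Cm_factor m (A i)" if i: "i < 5" for i
    unfolding Cm_factor_def
  proof (intro exI[of _ "{Cy (2*i), Cy (2*i+1)}"] conjI)
    show "\<forall>C\<in>{Cy (2 * i), Cy (2 * i + 1)}. dicycle m C" using cyc i by auto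
    show "\<forall>C\<in>{Cy (2 * i), Cy (2 * i + 1)}. \<forall>C'\<in>{Cy (2 * i), Cy (2 * i + 1)}. C \<noteq> C' \<longrightarrow> set C \<inter> set C' = {}"
      using vd[OF i] by auto
    show "(\<Union>C\<in>{Cy (2 * i), Cy (2 * i + 1)}. cyc_arcs C) = A i" by (simp add: A_def)
    have d1: "dicycle m (Cy (2*i))" "dicycle m (Cy (2*i+1))" using cyc i by auto
    have sub: "set (Cy (2*i)) \<union> set (Cy (2*i+1)) \<subseteq> verts m" using d1 by (auto simp: dicycle_def)
    have "card (set (Cy (2*i)) \<union> set (Cy (2*i+1))) = m + m"
      using d1 vd[OF i] by (simp add: card_Un_disjoint distinct_card dicycle_def)
    then have "set (Cy (2*i)) \<union> set (Cy (2*i+1)) = verts m"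
      using sub by (intro card_subset_eq finite_verts) (auto simp: card_verts)
    then show "(\<Union>C\<in>{Cy (2 * i), Cy (2 * i + 1)}. set C) = verts m" by simp
  qed
  have disjA: "A i \<inter> A i' = {}" if "i < 5" "i' < 5" "i \<noteq> i'" for i i'
    using that ad[of "2*i" "2*i'"] ad[of "2*i+1" "2*i'"] ad[of "2*i" "2*i'+1"] ad[of "2*i+1" "2*i'+1"]
    unfolding A_def by auto
  have finA: "finite (A i)" if "i < 5" for i using fin that unfolding A_def by simp
  show ?thesis unfolding Cm_factorization_def
  proof (intro exI[of _ "A ` {..<5}"] conjI ballI impI)
    show "\<And>B. B \<in> A ` {..<5} \<Longrightarrow> Cm_factor m B" using facA by auto
    show "\<And>B B'. B \<in> A ` {..<5} \<Longrightarrow> B' \<in> A ` {..<5} \<Longrightarrow> B \<noteq> B' \<Longrightarrow> B \<inter> B' = {}"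
      using disjA by auto
    have sub: "\<Union> (A ` {..<5}) \<subseteq> G_arcs m" unfolding A_def
    proof (intro UN_least Un_least)
      fix i :: nat assume "i \<in> {..<5}"
      then show "cyc_arcs (Cy (2*i)) \<subseteq> G_arcs m" "cyc_arcs (Cy (2*i+1)) \<subseteq> G_arcs m"
        using cyc_arcs_G cyc by auto
    qed
    have "card (\<Union> (A ` {..<5})) = (\<Sum>i<5. card (A i))"
      by (rule card_UN_disjoint) (use finA disjA in auto)
    also have "\<dots> = 10 * m" using cardA by simp
    finally show "\<Union> (A ` {..<5}) = G_arcs m"
      using sub card_G[OF m] by (intro card_subset_eq) auto
  qed
qed



lemma shift_12k: "m = p + 12 * k \<Longrightarrow> shift m (int (12 * k)) v = shift m (- int p) v"
proof -
  assume m: "m = p + 12 * k"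
  have "(int (snd v) + int (12 * k)) mod int m = (int (snd v) - int p + int m) mod int m"
    using m by (simp add: algebra_simps)
  also have "\<dots> = (int (snd v) - int p) mod int m" by (simp add: mod_add_self2)
  finally show ?thesis by (simp add: shift_def)
qed

lemma rep_k:
  assumes m: "m = p + 12 * k" "0 < m" and w: "walk m P" and b: "1 \<le> k \<Longrightarrow> blockP m p P"
  shows "walk m (rep m P k)" "hd (rep m P k) = hd P" "last (rep m P k) = shift m (- int p) (hd P)"
    "len (rep m P k) = k * len P"
proof -
  have hv: "hd P \<in> verts m" using w by (auto simp: walk_def)
  have "(walk m (rep m P k) \<and> hd (rep m P k) = hd P \<and> last (rep m P k) = shift m (int (12 * k)) (hd P)) \<and> len (rep m P k) = k * len P"
  proof (cases "k = 0")
    case True then show ?thesis using w hv by (auto simp: walk_def len_def shift_id)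
  next
    case False then show ?thesis using rep_basic[OF m(2) b] by auto
  qed
  then show "walk m (rep m P k)" "hd (rep m P k) = hd P" "last (rep m P k) = shift m (- int p) (hd P)"
    "len (rep m P k) = k * len P" using shift_12k[OF m(1)] by auto
qed

lemma butlast_sub: "P \<noteq> [] \<Longrightarrow> set (butlast P) \<subseteq> insert (hd P) (internal P)"
  unfolding internal_def by (cases P) (auto simp: butlast_tl[symmetric] in_set_butlastD dest: in_set_butlastD)

lemma blockP_of:
  assumes m: "m = p + 12 * k" "1 \<le> k" and dq: "dipath m Q" and c6: "C6 m p Q" and c4: "C4 m p A"
    and ts: "tgt A = src Q"
  shows "blockP m p Q"
proof -
  have ne: "Q \<noteq> []" using dq by (auto simp: dipath_def walk_def)
  obtain i where i: "i \<le> 2" "snd (tgt A) = (p + i) mod m" using c4 by (auto simp: C4_def)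
  have "(p + i) mod m = p + i" using m i by simp
  then have h: "snd (hd Q) = p + i" using i ts by (simp add: src_def)
  have "\<forall>v\<in>set (butlast Q). p \<le> snd v \<and> snd v \<le> p + 11"
  proof
    fix v assume "v \<in> set (butlast Q)"
    then have "v = hd Q \<or> v \<in> internal Q" using butlast_sub[OF ne] by auto
    then show "p \<le> snd v \<and> snd v \<le> p + 11" using h i c6 by (auto simp: C6_def V1_def)
  qed
  then show ?thesis using dq c6 by (auto simp: blockP_def dipath_def C6_def tgt_def src_def)
qed

lemma C4_V0: "C4 m p A \<Longrightarrow> v \<in> set (butlast A) \<Longrightarrow> snd v < p"
  by (auto simp: C4_def V0_def)

lemma dicycle_of_cwt: "closed_walk_type m j P \<Longrightarrow> dicycle m (butlast P)"
  by (simp add: closed_walk_type_def cycle_of_type_def)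

lemma pair_cycle:
  assumes m: "m = p + 12 * k" "11 \<le> p"
    and dW: "dipath m W" and dX: "dipath m X" and dQ: "dipath m Q" and dR: "dipath m R"
    and k1: "1 \<le> k \<Longrightarrow> set W \<inter> set X = {} \<and> set Q \<inter> set R = {} \<and> C6 m p Q \<and> C6 m p R \<and> len Q + len R = 12"
    and k0: "k = 0 \<Longrightarrow> closed_walk_type m j (W @ tl X)"
    and c2: "src X = shift m (- int p) (tgt W)" "src W = shift m (- int p) (tgt X)"
    and c3: "len W + len X = p"
    and c4: "C4 m p W" "C4 m p X" and c5: "tgt W = src Q" "tgt X = src R"
  shows "dicycle m (butlast (join (join W (rep m Q k)) (join X (rep m R k))))"
    "cyc_arcs (butlast (join (join W (rep m Q k)) (join X (rep m R k)))) =
       walk_arcs W \<union> walk_arcs (rep m Q k) \<union> walk_arcs X \<union> walk_arcs (rep m R k)"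
    "set (butlast (join (join W (rep m Q k)) (join X (rep m R k)))) =
       set (butlast W) \<union> set (butlast (rep m Q k)) \<union> set (butlast X) \<union> set (butlast (rep m R k))"
proof -
  have m0: "0 < m" using m by simp
  have wW: "walk m W" and wX: "walk m X" and wQ: "walk m Q" and wR: "walk m R"
    using dW dX dQ dR by (auto simp: dipath_def)
  have bQ: "blockP m p Q" if "1 \<le> k" using blockP_of[OF m(1) that dQ _ c4(1) c5(1)] k1 that by blast
  have bR: "blockP m p R" if "1 \<le> k" using blockP_of[OF m(1) that dR _ c4(2) c5(2)] k1 that by blast
  note rQ = rep_k[OF m(1) m0 wQ bQ] and rR = rep_k[OF m(1) m0 wR bR]
  define HW where "HW = join W (rep m Q k)"
  define HX where "HX = join X (rep m R k)"
  define Wc where "Wc = join HW HX"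
  have ne: "W \<noteq> []" "X \<noteq> []" "rep m Q k \<noteq> []" "rep m R k \<noteq> []"
    using wW wX rQ(1) rR(1) by (auto simp: walk_def)
  have lk1: "last W = hd (rep m Q k)" using c5(1) rQ(2) by (simp add: tgt_def src_def)
  have lk2: "last X = hd (rep m R k)" using c5(2) rR(2) by (simp add: tgt_def src_def)
  note JW = join_basic[OF ne(1,3) lk1] and JX = join_basic[OF ne(2,4) lk2]
  have wHW: "walk m HW" unfolding HW_def by (rule walk_join[OF wW rQ(1) lk1])
  have wHX: "walk m HX" unfolding HX_def by (rule walk_join[OF wX rR(1) lk2])
  have lk: "last HW = hd HX" unfolding HW_def HX_def using JW JX rQ(3) c5 c2 rQ(2)
    by (simp add: tgt_def src_def)
  note J = join_basic[OF JW(1) JX(1) lk[unfolded HW_def HX_def]]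
  have wWc: "walk m Wc" unfolding Wc_def by (rule walk_join[OF wHW wHX lk])
  have hl: "hd Wc = last Wc" unfolding Wc_def HW_def HX_def using J JW JX rR(3) c5 c2
    by (simp add: tgt_def src_def)
  have lenWc: "len Wc = m"
  proof -
    have "len Wc = len W + k * len Q + (len X + k * len R)" unfolding Wc_def HW_def HX_def
      using len_join[OF JW(1) JX(1) lk[unfolded HW_def HX_def]] len_join[OF ne(1,3) lk1] len_join[OF ne(2,4) lk2] rQ(4) rR(4)
      by simp
    also have "\<dots> = len W + len X + k * (len Q + len R)" by (simp add: algebra_simps)
    also have "\<dots> = m" using c3 m k1 by (cases "k = 0") auto
    finally show ?thesis .
  qed
  have bl: "butlast Wc = butlast W @ butlast (rep m Q k) @ butlast X @ butlast (rep m R k)"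
    unfolding Wc_def HW_def HX_def using J JW JX by simp
  have dist: "distinct (butlast Wc)"
  proof (cases "k = 0")
    case True
    have "Wc = W @ tl X" unfolding Wc_def HW_def HX_def True by (simp add: join_def)
    then show ?thesis using dicycle_of_cwt[OF k0[OF True]] by (simp add: dicycle_def)
  next
    case False
    then have k: "1 \<le> k" by simp
    have pk: "p + 12 * k \<le> m" using m by simp
    have d1: "distinct (butlast W)" "distinct (butlast X)" using dW dX by (auto simp: dipath_def distinct_butlast)
    have d2: "distinct (butlast (rep m Q k))" "distinct (butlast (rep m R k))"
      using rep_distinct[OF m0 bQ[OF k] pk] rep_distinct[OF m0 bR[OF k] pk] by auto
    have lowW: "snd v < p" if "v \<in> set (butlast W)" for v using C4_V0[OF c4(1) that] .
    have lowX: "snd v < p" if "v \<in> set (butlast X)" for v using C4_V0[OF c4(2) that] .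
    have hiQ: "p \<le> snd v" if "v \<in> set (butlast (rep m Q k))" for v using rep_elem_range[OF m0 bQ[OF k] pk that] by simp
    have hiR: "p \<le> snd v" if "v \<in> set (butlast (rep m R k))" for v using rep_elem_range[OF m0 bR[OF k] pk that] by simp
    have WX: "set (butlast W) \<inter> set (butlast X) = {}" using k1[OF k] by (auto dest: in_set_butlastD)
    have QR: "set (butlast (rep m Q k)) \<inter> set (butlast (rep m R k)) = {}"
    proof (rule ccontr)
      assume "\<not> ?thesis"
      then obtain v where "v \<in> set (butlast (rep m Q k))" "v \<in> set (butlast (rep m R k))" by auto
      then obtain u where "u \<in> set (butlast Q)" "u \<in> set (butlast R)" using rep_disj_gen[OF m0 bQ[OF k] bR[OF k] pk _ _ pk] by blast
      then show False using k1[OF k] by (auto dest: in_set_butlastD)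
    qed
    show ?thesis unfolding bl using d1 d2 WX QR lowW lowX hiQ hiR
      by (auto simp: distinct_append) (meson leD)+
  qed
  note CC = closed_cycle[OF wWc hl lenWc dist m0]
  show "dicycle m (butlast (join (join W (rep m Q k)) (join X (rep m R k))))"
    using CC(1) by (simp add: Wc_def HW_def HX_def)
  have "walk_arcs Wc = walk_arcs W \<union> walk_arcs (rep m Q k) \<union> walk_arcs X \<union> walk_arcs (rep m R k)"
    unfolding Wc_def HW_def HX_def
    using walk_arcs_join[OF JW(1) JX(1) lk[unfolded HW_def HX_def]] walk_arcs_join[OF ne(1,3) lk1] walk_arcs_join[OF ne(2,4) lk2]
    by auto
  then show "cyc_arcs (butlast (join (join W (rep m Q k)) (join X (rep m R k)))) =
       walk_arcs W \<union> walk_arcs (rep m Q k) \<union> walk_arcs X \<union> walk_arcs (rep m R k)"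
    using CC(2) by (simp add: Wc_def HW_def HX_def)
  show "set (butlast (join (join W (rep m Q k)) (join X (rep m R k)))) =
       set (butlast W) \<union> set (butlast (rep m Q k)) \<union> set (butlast X) \<union> set (butlast (rep m R k))"
    using bl by (auto simp: Wc_def HW_def HX_def)
qed

lemma single_cycle:
  assumes m: "m = p + 12 * k" "11 \<le> p"
    and wX: "walk m X" and dR: "dipath m R"
    and k1: "1 \<le> k \<Longrightarrow> distinct X \<and> C6 m p R \<and> len R = 12"
    and k0: "k = 0 \<Longrightarrow> closed_walk_type m j X"
    and c2: "src X = shift m (- int p) (tgt X)" and c3: "len X = p"
    and c4: "C4 m p X" and c5: "tgt X = src R"
  shows "dicycle m (butlast (join X (rep m R k)))"
    "cyc_arcs (butlast (join X (rep m R k))) = walk_arcs X \<union> walk_arcs (rep m R k)"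
    "set (butlast (join X (rep m R k))) = set (butlast X) \<union> set (butlast (rep m R k))"
proof -
  have m0: "0 < m" using m by simp
  have wR: "walk m R" using dR by (auto simp: dipath_def)
  have bR: "blockP m p R" if "1 \<le> k" using blockP_of[OF m(1) that dR _ c4 c5] k1 that by blast
  note rR = rep_k[OF m(1) m0 wR bR]
  define Wc where "Wc = join X (rep m R k)"
  have ne: "X \<noteq> []" "rep m R k \<noteq> []" using wX rR(1) by (auto simp: walk_def)
  have lk: "last X = hd (rep m R k)" using c5 rR(2) by (simp add: tgt_def src_def)
  note J = join_basic[OF ne lk]
  have wWc: "walk m Wc" unfolding Wc_def by (rule walk_join[OF wX rR(1) lk])
  have hl: "hd Wc = last Wc" unfolding Wc_def using J rR(3) c5 c2 by (simp add: tgt_def src_def)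
  have lenWc: "len Wc = m"
  proof -
    have "len Wc = len X + k * len R" unfolding Wc_def using len_join[OF ne lk] rR(4) by simp
    also have "\<dots> = m" using c3 m k1 by (cases "k = 0") auto
    finally show ?thesis .
  qed
  have bl: "butlast Wc = butlast X @ butlast (rep m R k)" unfolding Wc_def using J by simp
  have dist: "distinct (butlast Wc)"
  proof (cases "k = 0")
    case True
    have "Wc = X" unfolding Wc_def True by (simp add: join_def)
    then show ?thesis using dicycle_of_cwt[OF k0[OF True]] by (simp add: dicycle_def)
  next
    case False
    then have k: "1 \<le> k" by simp
    have pk: "p + 12 * k \<le> m" using m by simp
    have d1: "distinct (butlast X)" using k1[OF k] by (auto simp: distinct_butlast)
    have d2: "distinct (butlast (rep m R k))" using rep_distinct[OF m0 bR[OF k] pk] by auto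
    have lowX: "snd v < p" if "v \<in> set (butlast X)" for v using C4_V0[OF c4 that] .
    have hiR: "p \<le> snd v" if "v \<in> set (butlast (rep m R k))" for v using rep_elem_range[OF m0 bR[OF k] pk that] by simp
    show ?thesis unfolding bl using d1 d2 lowX hiR
      by (auto simp: distinct_append) (meson leD)+
  qed
  note CC = closed_cycle[OF wWc hl lenWc dist m0]
  show "dicycle m (butlast (join X (rep m R k)))" using CC(1) by (simp add: Wc_def)
  show "cyc_arcs (butlast (join X (rep m R k))) = walk_arcs X \<union> walk_arcs (rep m R k)"
    using CC(2) walk_arcs_join[OF ne lk] by (simp add: Wc_def)
  show "set (butlast (join X (rep m R k))) = set (butlast X) \<union> set (butlast (rep m R k))"
    using bl by (simp add: Wc_def)
qed



definition cyc2 :: "nat \<Rightarrow> nat \<Rightarrow> vtx list list \<Rightarrow> nat \<Rightarrow> vtx list" where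
  "cyc2 m k B b = butlast (join (join (B!(2*b)) (rep m (B!(2*b+4)) k)) (join (B!(2*b+1)) (rep m (B!(2*b+5)) k)))"

definition cyc1 :: "nat \<Rightarrow> nat \<Rightarrow> vtx list list \<Rightarrow> nat \<Rightarrow> vtx list" where
  "cyc1 m k B b = butlast (join (B!b) (rep m (B!(b+2)) k))"

lemma rep0[simp]: "rep m P 0 = [hd P]" by simp

lemma base_rep_disj:
  assumes m: "m = p + 12 * k" "11 \<le> p" and c4: "C4 m p A" and b: "1 \<le> k \<Longrightarrow> blockP m p P"
  shows "set (butlast A) \<inter> set (butlast (rep m P k)) = {}"
proof (cases "k = 0")
  case False
  then have k: "1 \<le> k" by simp
  have m0: "0 < m" "p + 12 * k \<le> m" using m by auto
  show ?thesis using C4_V0[OF c4] rep_elem_range[OF m0(1) b[OF k] m0(2)] by (meson disjoint_iff leD)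
qed simp

lemma rep_rep_disj:
  assumes m: "m = p + 12 * k" "11 \<le> p" and b: "1 \<le> k \<Longrightarrow> blockP m p P" and b': "1 \<le> k \<Longrightarrow> blockP m p P'"
    and d: "set P \<inter> set P' = {}"
  shows "set (butlast (rep m P k)) \<inter> set (butlast (rep m P' k)) = {}"
proof (cases "k = 0")
  case False
  then have k: "1 \<le> k" by simp
  have m0: "0 < m" "p + 12 * k \<le> m" using m by auto
  show ?thesis
  proof (rule ccontr)
    assume "\<not> ?thesis"
    then obtain v where "v \<in> set (butlast (rep m P k))" "v \<in> set (butlast (rep m P' k))" by auto
    then obtain u where "u \<in> set (butlast P)" "u \<in> set (butlast P')"
      using rep_disj_gen[OF m0(1) b[OF k] b'[OF k] m0(2) _ _ m0(2)] by blast
    then show False using d by (auto dest: in_set_butlastD)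
  qed
qed simp

lemma type2_facts:
  assumes t: "type2_basic m p k B" and m: "m = p + 12 * k" "11 \<le> p"
  shows "length B = 8" "\<And>r. r < 8 \<Longrightarrow> dipath m (B!r)" "\<And>r. r < 4 \<Longrightarrow> C4 m p (B!r)"
    "\<And>r. 4 \<le> r \<Longrightarrow> r < 8 \<Longrightarrow> 1 \<le> k \<Longrightarrow> blockP m p (B!r)"
    "\<And>b. b < 2 \<Longrightarrow> dicycle m (cyc2 m k B b)"
    "\<And>b. b < 2 \<Longrightarrow> cyc_arcs (cyc2 m k B b) = walk_arcs (B!(2*b)) \<union> walk_arcs (rep m (B!(2*b+4)) k)
        \<union> walk_arcs (B!(2*b+1)) \<union> walk_arcs (rep m (B!(2*b+5)) k)"
    "set (cyc2 m k B 0) \<inter> set (cyc2 m k B 1) = {}"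
proof -
  have T: "length B = 8" "\<forall>P\<in>set B. dipath m P"
     "\<forall>i\<in>{4..7}. \<forall>j\<in>{4..7}. i \<noteq> j \<longrightarrow> set (B!i) \<inter> set (B!j) = {}"
     "k \<ge> 1 \<longrightarrow> (\<forall>i<4. \<forall>j<4. i \<noteq> j \<longrightarrow> set (B!i) \<inter> set (B!j) = {})"
     "k = 0 \<longrightarrow> closed_walk_type m 2 (B!0 @ tl (B!1)) \<and> closed_walk_type m 2 (B!2 @ tl (B!3)) \<and>
               (set (B!0) \<union> set (B!1)) \<inter> (set (B!2) \<union> set (B!3)) = {}"
     "src (B!1) = shift m (- int p) (tgt (B!0))" "src (B!0) = shift m (- int p) (tgt (B!1))"
     "src (B!3) = shift m (- int p) (tgt (B!2))" "src (B!2) = shift m (- int p) (tgt (B!3))"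
     "len (B!0) + len (B!1) = p" "len (B!2) + len (B!3) = p"
     "k \<ge> 1 \<longrightarrow> len (B!4) + len (B!5) = 12 \<and> len (B!6) + len (B!7) = 12"
     "C4 m p (B!0)" "C4 m p (B!1)" "C4 m p (B!2)" "C4 m p (B!3)"
     "tgt (B!0) = src (B!4)" "tgt (B!1) = src (B!5)" "tgt (B!2) = src (B!6)" "tgt (B!3) = src (B!7)"
     "k \<ge> 1 \<longrightarrow> C6 m p (B!4) \<and> C6 m p (B!5) \<and> C6 m p (B!6) \<and> C6 m p (B!7)"
    using t unfolding type2_basic_def Let_def by blast+
  show "length B = 8" by (rule T(1))
  have dp: "dipath m (B!r)" if "r < 8" for r using T(1,2) that by auto
  then show "\<And>r. r < 8 \<Longrightarrow> dipath m (B!r)" .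
  have c4: "C4 m p (B!r)" if "r < 4" for r
    using that T(13-16) by (auto simp: less_Suc_eq numeral_eq_Suc)
  then show "\<And>r. r < 4 \<Longrightarrow> C4 m p (B!r)" .
  have bl: "blockP m p (B!r)" if "4 \<le> r" "r < 8" "1 \<le> k" for r
  proof -
    have "r = 4 \<or> r = 5 \<or> r = 6 \<or> r = 7" using that by auto
    then show ?thesis using blockP_of[OF m(1) that(3) dp[OF that(2)]] T(13-21) that(3)
      by (metis (no_types, lifting))
  qed
  then show "\<And>r. 4 \<le> r \<Longrightarrow> r < 8 \<Longrightarrow> 1 \<le> k \<Longrightarrow> blockP m p (B!r)" .
  have P0: "dicycle m (cyc2 m k B 0) \<and> cyc_arcs (cyc2 m k B 0) = walk_arcs (B!0) \<union> walk_arcs (rep m (B!4) k)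
        \<union> walk_arcs (B!1) \<union> walk_arcs (rep m (B!5) k) \<and>
        set (cyc2 m k B 0) = set (butlast (B!0)) \<union> set (butlast (rep m (B!4) k)) \<union> set (butlast (B!1)) \<union> set (butlast (rep m (B!5) k))"
    using pair_cycle[OF m dp[of 0] dp[of 1] dp[of 4] dp[of 5], of 2] T unfolding cyc2_def by simp
  have P1: "dicycle m (cyc2 m k B 1) \<and> cyc_arcs (cyc2 m k B 1) = walk_arcs (B!2) \<union> walk_arcs (rep m (B!6) k)
        \<union> walk_arcs (B!3) \<union> walk_arcs (rep m (B!7) k) \<and>
        set (cyc2 m k B 1) = set (butlast (B!2)) \<union> set (butlast (rep m (B!6) k)) \<union> set (butlast (B!3)) \<union> set (butlast (rep m (B!7) k))"
    using pair_cycle[OF m dp[of 2] dp[of 3] dp[of 6] dp[of 7], of 2] T unfolding cyc2_def by simp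
  show "\<And>b. b < 2 \<Longrightarrow> dicycle m (cyc2 m k B b)" using P0 P1 by (auto simp: less_Suc_eq numeral_eq_Suc)
  show "\<And>b. b < 2 \<Longrightarrow> cyc_arcs (cyc2 m k B b) = walk_arcs (B!(2*b)) \<union> walk_arcs (rep m (B!(2*b+4)) k)
        \<union> walk_arcs (B!(2*b+1)) \<union> walk_arcs (rep m (B!(2*b+5)) k)"
    using P0 P1 by (auto simp: less_Suc_eq numeral_eq_Suc)
  show "set (cyc2 m k B 0) \<inter> set (cyc2 m k B 1) = {}"
  proof (cases "k = 0")
    case True
    then show ?thesis using P0 P1 T(5) by (auto dest: in_set_butlastD)
  next
    case False
    then have k: "1 \<le> k" by simp
    have bb: "set (butlast (B!i)) \<inter> set (butlast (B!j)) = {}" if "i < 4" "j < 4" "i \<noteq> j" for i j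
      using T(4) k that by (auto dest: in_set_butlastD)
    have br: "set (butlast (B!i)) \<inter> set (butlast (rep m (B!j) k)) = {}" if "i < 4" "4 \<le> j" "j < 8" for i j
      using base_rep_disj[OF m c4[OF that(1)] bl[OF that(2,3)]] .
    have rr: "set (butlast (rep m (B!i) k)) \<inter> set (butlast (rep m (B!j) k)) = {}" if "4 \<le> i" "i < 8" "4 \<le> j" "j < 8" "i \<noteq> j" for i j
      using rep_rep_disj[OF m bl[OF that(1,2)] bl[OF that(3,4)]] T(3) that by auto
    show ?thesis using P0 P1 bb[of 0 2] bb[of 0 3] bb[of 1 2] bb[of 1 3]
      br[of 0 6] br[of 0 7] br[of 1 6] br[of 1 7] br[of 2 4] br[of 2 5] br[of 3 4] br[of 3 5]
      rr[of 4 6] rr[of 4 7] rr[of 5 6] rr[of 5 7] by auto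
  qed
qed

lemma type1_facts:
  assumes t: "type1_basic m p k B" and m: "m = p + 12 * k" "11 \<le> p"
  shows "length B = 4" "\<And>r. r < 2 \<Longrightarrow> C4 m p (B!r)"
    "\<And>r. 2 \<le> r \<Longrightarrow> r < 4 \<Longrightarrow> walk m (B!r)"
    "\<And>r. 2 \<le> r \<Longrightarrow> r < 4 \<Longrightarrow> 1 \<le> k \<Longrightarrow> blockP m p (B!r)"
    "\<And>b. b < 2 \<Longrightarrow> dicycle m (cyc1 m k B b)"
    "\<And>b. b < 2 \<Longrightarrow> cyc_arcs (cyc1 m k B b) = walk_arcs (B!b) \<union> walk_arcs (rep m (B!(b+2)) k)"
    "set (cyc1 m k B 0) \<inter> set (cyc1 m k B 1) = {}"
proof -
  have T: "length B = 4" "dipath m (B!2)" "dipath m (B!3)" "set (B!2) \<inter> set (B!3) = {}"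
     "k \<ge> 1 \<longrightarrow> dipath m (B!0) \<and> dipath m (B!1) \<and> set (B!0) \<inter> set (B!1) = {}"
     "k = 0 \<longrightarrow> closed_walk_type m 1 (B!0) \<and> closed_walk_type m 1 (B!1) \<and> set (B!0) \<inter> set (B!1) = {}"
     "src (B!0) = shift m (- int p) (tgt (B!0))" "src (B!1) = shift m (- int p) (tgt (B!1))"
     "len (B!0) = p" "len (B!1) = p"
     "k \<ge> 1 \<longrightarrow> len (B!2) = 12 \<and> len (B!3) = 12"
     "C4 m p (B!0)" "C4 m p (B!1)"
     "tgt (B!0) = src (B!2)" "tgt (B!1) = src (B!3)"
     "k \<ge> 1 \<longrightarrow> C6 m p (B!2) \<and> C6 m p (B!3)"
    using t unfolding type1_basic_def Let_def by blast+
  show "length B = 4" by (rule T(1))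
  have c4: "C4 m p (B!r)" if "r < 2" for r using that T(12,13) by (auto simp: less_Suc_eq numeral_eq_Suc)
  then show "\<And>r. r < 2 \<Longrightarrow> C4 m p (B!r)" .
  have wb: "walk m (B!0)" "walk m (B!1)" using T(5,6)
    by (cases "k = 0"; auto simp: closed_walk_type_def dipath_def)+
  have dp: "dipath m (B!r)" if "2 \<le> r" "r < 4" for r
  proof -
    have "r = 2 \<or> r = 3" using that by auto
    then show ?thesis using T(2,3) by auto
  qed
  then show "\<And>r. 2 \<le> r \<Longrightarrow> r < 4 \<Longrightarrow> walk m (B!r)" by (auto simp: dipath_def)
  have bl: "blockP m p (B!r)" if "2 \<le> r" "r < 4" "1 \<le> k" for r
  proof -
    have "r = 2 \<or> r = 3" using that by auto
    then show ?thesis using blockP_of[OF m(1) that(3) dp[OF that(1,2)]] T(12-16) that(3)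
      by (metis (no_types, lifting))
  qed
  then show "\<And>r. 2 \<le> r \<Longrightarrow> r < 4 \<Longrightarrow> 1 \<le> k \<Longrightarrow> blockP m p (B!r)" .
  have P0: "dicycle m (cyc1 m k B 0) \<and> cyc_arcs (cyc1 m k B 0) = walk_arcs (B!0) \<union> walk_arcs (rep m (B!2) k) \<and>
        set (cyc1 m k B 0) = set (butlast (B!0)) \<union> set (butlast (rep m (B!2) k))"
  proof -
    have e: "cyc1 m k B 0 = butlast (join (B!0) (rep m (B!2) k))" unfolding cyc1_def by (simp add: numeral_2_eq_2)
    show ?thesis unfolding e using single_cycle[OF m wb(1) T(2), of 1] T by (simp add: dipath_def)
  qed
  have P1: "dicycle m (cyc1 m k B 1) \<and> cyc_arcs (cyc1 m k B 1) = walk_arcs (B!1) \<union> walk_arcs (rep m (B!3) k) \<and>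
        set (cyc1 m k B 1) = set (butlast (B!1)) \<union> set (butlast (rep m (B!3) k))"
  proof -
    have e: "cyc1 m k B 1 = butlast (join (B!1) (rep m (B!3) k))" unfolding cyc1_def by (simp add: numeral_3_eq_3)
    show ?thesis unfolding e using single_cycle[OF m wb(2) T(3), of 1] T by (simp add: dipath_def)
  qed
  show "\<And>b. b < 2 \<Longrightarrow> dicycle m (cyc1 m k B b)" using P0 P1 by (auto simp: less_Suc_eq numeral_eq_Suc)
  show "\<And>b. b < 2 \<Longrightarrow> cyc_arcs (cyc1 m k B b) = walk_arcs (B!b) \<union> walk_arcs (rep m (B!(b+2)) k)"
    using P0 P1 by (auto simp: less_Suc_eq numeral_eq_Suc)
  show "set (cyc1 m k B 0) \<inter> set (cyc1 m k B 1) = {}"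
  proof (cases "k = 0")
    case True
    then show ?thesis using P0 P1 T(6) by (auto dest: in_set_butlastD)
  next
    case False
    then have k: "1 \<le> k" by simp
    have bb: "set (butlast (B!0)) \<inter> set (butlast (B!1)) = {}" using T(5) k by (auto dest: in_set_butlastD)
    have br: "set (butlast (B!i)) \<inter> set (butlast (rep m (B!j) k)) = {}" if "i < 2" "2 \<le> j" "j < 4" for i j
      using base_rep_disj[OF m c4[OF that(1)] bl[OF that(2,3)]] .
    have rr: "set (butlast (rep m (B!2) k)) \<inter> set (butlast (rep m (B!3) k)) = {}"
      using rep_rep_disj[OF m bl[of 2] bl[of 3]] T(4) by auto
    show ?thesis using P0 P1 bb br[of 0 3] br[of 1 2] rr by auto
  qed
qed



lemma arcs_base_block:
  assumes m: "m = p + 12 * k" "11 \<le> p" and c4: "C4 m p A" and b: "1 \<le> k \<Longrightarrow> blockP m p P"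
  shows "walk_arcs A \<inter> walk_arcs (rep m P k) = {}"
proof (cases "k = 0")
  case False
  then have k: "1 \<le> k" by simp
  have m0: "0 < m" "p + 12 * k \<le> m" using m by auto
  show ?thesis
  proof (rule ccontr)
    assume "\<not> ?thesis"
    then obtain a c where e: "(a,c) \<in> walk_arcs A" "(a,c) \<in> walk_arcs (rep m P k)" by auto
    have "snd a < p" using C4_V0[OF c4] walk_arcs_tail[OF e(1)] by blast
    moreover have "p \<le> snd a" using rep_arcs_elem[OF m0(1) b[OF k] m0(2) e(2)] by auto
    ultimately show False by simp
  qed
qed simp

lemma arcs_block_block:
  assumes m: "m = p + 12 * k" "11 \<le> p" and b: "1 \<le> k \<Longrightarrow> blockP m p P" and b': "1 \<le> k \<Longrightarrow> blockP m p P'"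
    and d: "walk_arcs P \<inter> walk_arcs P' = {}"
  shows "walk_arcs (rep m P k) \<inter> walk_arcs (rep m P' k) = {}"
proof (cases "k = 0")
  case False
  then have k: "1 \<le> k" by simp
  have m0: "0 < m" "p + 12 * k \<le> m" using m by auto
  show ?thesis using rep_arcs_disj[OF m0(1) b[OF k] b'[OF k] m0(2) d] .
qed simp

lemma main:
  fixes p k m :: nat and T2 T1 :: "nat \<Rightarrow> vtx list list"
  assumes p: "11 \<le> p" and m: "m = p + 12 * k"
    and h2: "\<forall>i<3. type2_basic m p k (T2 i)" and h1: "\<forall>i<2. type1_basic m p k (T1 i)"
    and hL: "\<forall>i<length L. \<forall>j<length L. i \<noteq> j \<longrightarrow> walk_arcs (L ! i) \<inter> walk_arcs (L ! j) = {}"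
    and L: "L = T2 0 @ T2 1 @ T2 2 @ T1 0 @ T1 1"
  shows "Cm_factorization m"
proof -
  note mm = m p
  have F2: "type2_basic m p k (T2 i)" if "i < 3" for i using h2 that by blast
  have F1: "type1_basic m p k (T1 i)" if "i < 2" for i using h1 that by blast
  have len2: "length (T2 i) = 8" if "i < 3" for i using type2_facts(1)[OF F2[OF that] mm] .
  have len1: "length (T1 i) = 4" if "i < 2" for i using type1_facts(1)[OF F1[OF that] mm] .
  have lenL: "length L = 32" using L len2[of 0] len2[of 1] len2[of 2] len1[of 0] len1[of 1] by simp
  have L2: "L ! (8*i + r) = T2 i ! r" if "i < 3" "r < 8" for i r
  proof -
    have "i = 0 \<or> i = 1 \<or> i = 2" using that by auto
    then show ?thesis
    proof (elim disjE)
      assume "i = 0" then show ?thesis using that L len2[of 0] by (simp add: nth_append)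
    next
      assume "i = 1" then show ?thesis using that L len2[of 0] len2[of 1] by (simp add: nth_append)
    next
      assume "i = 2" then show ?thesis using that L len2[of 0] len2[of 1] len2[of 2] by (simp add: nth_append)
    qed
  qed
  have L1: "L ! (24 + 4*i + r) = T1 i ! r" if "i < 2" "r < 4" for i r
  proof -
    have "i = 0 \<or> i = 1" using that by auto
    then show ?thesis
    proof (elim disjE)
      assume "i = 0" then show ?thesis using that L len2[of 0] len2[of 1] len2[of 2] len1[of 0] by (simp add: nth_append)
    next
      assume "i = 1" then show ?thesis using that L len2[of 0] len2[of 1] len2[of 2] len1[of 0] by (simp add: nth_append)
    qed
  qed
  define blk where "blk l = (if l < 24 then 4 \<le> l mod 8 else 2 \<le> (l - 24) mod 4)" for l :: nat
  define Xa where "Xa l = (if blk l then walk_arcs (rep m (L!l) k) else walk_arcs (L!l))" for l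
  have SF: "(\<not> blk l \<longrightarrow> C4 m p (L!l)) \<and> (blk l \<longrightarrow> (1 \<le> k \<longrightarrow> blockP m p (L!l)))" if "l < 32" for l
  proof (cases "l < 24")
    case True
    define i r where "i = l div 8" and "r = l mod 8"
    have l: "l = 8*i + r" "i < 3" "r < 8" using True by (auto simp: i_def r_def)
    have b: "blk l = (4 \<le> r)" using True by (simp add: blk_def r_def)
    show ?thesis unfolding l(1) L2[OF l(2,3)] using b type2_facts(3,4)[OF F2[OF l(2)] mm] l by auto
  next
    case False
    define i r where "i = (l - 24) div 4" and "r = (l - 24) mod 4"
    have l: "l = 24 + 4*i + r" "i < 2" "r < 4" using False that by (auto simp: i_def r_def)
    have b: "blk l = (2 \<le> r)" using False by (simp add: blk_def r_def)
    show ?thesis unfolding l(1) L1[OF l(2,3)] using b type1_facts(2,4)[OF F1[OF l(2)] mm] l by auto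
  qed
  have XD: "Xa l \<inter> Xa l' = {}" if "l < 32" "l' < 32" "l \<noteq> l'" for l l'
  proof -
    have ad: "walk_arcs (L!l) \<inter> walk_arcs (L!l') = {}" using hL lenL that by auto
    show ?thesis
    proof (cases "blk l"; cases "blk l'")
      assume "blk l" "blk l'"
      then show ?thesis unfolding Xa_def using arcs_block_block[OF mm(1,2) _ _ ad] SF that by auto
    next
      assume "blk l" "\<not> blk l'"
      then show ?thesis unfolding Xa_def using arcs_base_block[OF mm(1,2), of "L!l'" "L!l"] SF that by auto
    next
      assume "\<not> blk l" "blk l'"
      then show ?thesis unfolding Xa_def using arcs_base_block[OF mm(1,2), of "L!l" "L!l'"] SF that by auto
    next
      assume "\<not> blk l" "\<not> blk l'"
      then show ?thesis unfolding Xa_def using ad by auto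
    qed
  qed
  define Cy where "Cy j = (if j < 6 then cyc2 m k (T2 (j div 2)) (j mod 2) else cyc1 m k (T1 ((j-6) div 2)) ((j-6) mod 2))" for j
  define own where "own l = (if l < 24 then 2*(l div 8) + (l mod 4) div 2 else 6 + 2*((l-24) div 4) + (l-24) mod 2)" for l :: nat
  have XL2: "Xa (8*i+r) = (if 4 \<le> r then walk_arcs (rep m (T2 i!r) k) else walk_arcs (T2 i!r))" if "i < 3" "r < 8" for i r
  proof -
    have "(8*i + r) mod 8 = r" using that(2) by simp
    moreover have "8*i+r < 24" using that by simp
    ultimately have "blk (8*i+r) = (4 \<le> r)" unfolding blk_def by simp
    then show ?thesis unfolding Xa_def L2[OF that] by simp
  qed
  have XL1: "Xa (24+4*i+r) = (if 2 \<le> r then walk_arcs (rep m (T1 i!r) k) else walk_arcs (T1 i!r))" if "i < 2" "r < 4" for i r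
  proof -
    have "(24+4*i + r - 24) mod 4 = r" using that(2) by simp
    then have "blk (24+4*i+r) = (2 \<le> r)" unfolding blk_def by simp
    then show ?thesis unfolding Xa_def L1[OF that] by simp
  qed
  have G2: "cyc_arcs (cyc2 m k (T2 i) b) \<subseteq> Xa (8*i+2*b) \<union> Xa (8*i+(2*b+4)) \<union> Xa (8*i+(2*b+1)) \<union> Xa (8*i+(2*b+5))"
    if "i < 3" "b < 2" for i b
    using type2_facts(6)[OF F2[OF that(1)] mm that(2)] XL2[OF that(1), of "2*b"] XL2[OF that(1), of "2*b+4"]
      XL2[OF that(1), of "2*b+1"] XL2[OF that(1), of "2*b+5"] that by auto
  have G1: "cyc_arcs (cyc1 m k (T1 i) b) \<subseteq> Xa (24+4*i+b) \<union> Xa (24+4*i+(b+2))"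
    if "i < 2" "b < 2" for i b
    using type1_facts(6)[OF F1[OF that(1)] mm that(2)] XL1[OF that(1), of "b"] XL1[OF that(1), of "b+2"]
      that by auto
  have G2': "cyc_arcs (cyc2 m k (T2 i) b) \<subseteq> Xa a0 \<union> Xa a1 \<union> Xa a2 \<union> Xa a3"
    if "i < 3" "b < 2" "a0 = 8*i+2*b" "a1 = 8*i+(2*b+4)" "a2 = 8*i+(2*b+1)" "a3 = 8*i+(2*b+5)" for i b a0 a1 a2 a3
    using G2[OF that(1,2)] that(3-6) by simp
  have G1': "cyc_arcs (cyc1 m k (T1 i) b) \<subseteq> Xa a0 \<union> Xa a1"
    if "i < 2" "b < 2" "a0 = 24+4*i+b" "a1 = 24+4*i+(b+2)" for i b a0 a1
    using G1[OF that(1,2)] that(3,4) by simp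
  have sub: "Xa a \<subseteq> (\<Union>l\<in>{l. l < 32 \<and> own l = j}. Xa l)" if "a < 32" "own a = j" for a j
    using that by blast
  have AX: "cyc_arcs (Cy j) \<subseteq> (\<Union>l\<in>{l. l < 32 \<and> own l = j}. Xa l)" if "j < 10" for j
  proof -
    have "j = 0 \<or> j = 1 \<or> j = 2 \<or> j = 3 \<or> j = 4 \<or> j = 5 \<or> j = 6 \<or> j = 7 \<or> j = 8 \<or> j = 9" using that by presburger
    then show ?thesis
    proof (elim disjE)
      assume j: "j = 0"
      have o: "own 0 = 0" "own 4 = 0" "own 1 = 0" "own 5 = 0" by (simp_all add: own_def)
      have c: "Cy 0 = cyc2 m k (T2 0) 0" by (simp add: Cy_def)
      have g: "cyc_arcs (cyc2 m k (T2 0) 0) \<subseteq> Xa 0 \<union> Xa 4 \<union> Xa 1 \<union> Xa 5" by (rule G2'[of 0 0]) simp_all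
      show ?thesis unfolding j c using g by (rule order.trans) (intro Un_least; rule sub; simp add: own_def)
    next
      assume j: "j = 1"
      have o: "own 2 = 1" "own 6 = 1" "own 3 = 1" "own 7 = 1" by (simp_all add: own_def)
      have c: "Cy 1 = cyc2 m k (T2 0) 1" by (simp add: Cy_def)
      have g: "cyc_arcs (cyc2 m k (T2 0) 1) \<subseteq> Xa 2 \<union> Xa 6 \<union> Xa 3 \<union> Xa 7" by (rule G2'[of 0 1]) simp_all
      show ?thesis unfolding j c using g by (rule order.trans) (intro Un_least; rule sub; simp add: own_def)
    next
      assume j: "j = 2"
      have o: "own 8 = 2" "own 12 = 2" "own 9 = 2" "own 13 = 2" by (simp_all add: own_def)
      have c: "Cy 2 = cyc2 m k (T2 1) 0" by (simp add: Cy_def)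
      have g: "cyc_arcs (cyc2 m k (T2 1) 0) \<subseteq> Xa 8 \<union> Xa 12 \<union> Xa 9 \<union> Xa 13" by (rule G2'[of 1 0]) simp_all
      show ?thesis unfolding j c using g by (rule order.trans) (intro Un_least; rule sub; simp add: own_def)
    next
      assume j: "j = 3"
      have o: "own 10 = 3" "own 14 = 3" "own 11 = 3" "own 15 = 3" by (simp_all add: own_def)
      have c: "Cy 3 = cyc2 m k (T2 1) 1" by (simp add: Cy_def)
      have g: "cyc_arcs (cyc2 m k (T2 1) 1) \<subseteq> Xa 10 \<union> Xa 14 \<union> Xa 11 \<union> Xa 15" by (rule G2'[of 1 1]) simp_all
      show ?thesis unfolding j c using g by (rule order.trans) (intro Un_least; rule sub; simp add: own_def)
    next
      assume j: "j = 4"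
      have o: "own 16 = 4" "own 20 = 4" "own 17 = 4" "own 21 = 4" by (simp_all add: own_def)
      have c: "Cy 4 = cyc2 m k (T2 2) 0" by (simp add: Cy_def)
      have g: "cyc_arcs (cyc2 m k (T2 2) 0) \<subseteq> Xa 16 \<union> Xa 20 \<union> Xa 17 \<union> Xa 21" by (rule G2'[of 2 0]) simp_all
      show ?thesis unfolding j c using g by (rule order.trans) (intro Un_least; rule sub; simp add: own_def)
    next
      assume j: "j = 5"
      have o: "own 18 = 5" "own 22 = 5" "own 19 = 5" "own 23 = 5" by (simp_all add: own_def)
      have c: "Cy 5 = cyc2 m k (T2 2) 1" by (simp add: Cy_def)
      have g: "cyc_arcs (cyc2 m k (T2 2) 1) \<subseteq> Xa 18 \<union> Xa 22 \<union> Xa 19 \<union> Xa 23" by (rule G2'[of 2 1]) simp_all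
      show ?thesis unfolding j c using g by (rule order.trans) (intro Un_least; rule sub; simp add: own_def)
    next
      assume j: "j = 6"
      have o: "own 24 = 6" "own 26 = 6" by (simp_all add: own_def)
      have c: "Cy 6 = cyc1 m k (T1 0) 0" by (simp add: Cy_def)
      have g: "cyc_arcs (cyc1 m k (T1 0) 0) \<subseteq> Xa 24 \<union> Xa 26" by (rule G1'[of 0 0]) simp_all
      show ?thesis unfolding j c using g by (rule order.trans) (intro Un_least; rule sub; simp add: own_def)
    next
      assume j: "j = 7"
      have o: "own 25 = 7" "own 27 = 7" by (simp_all add: own_def)
      have c: "Cy 7 = cyc1 m k (T1 0) 1" by (simp add: Cy_def)
      have g: "cyc_arcs (cyc1 m k (T1 0) 1) \<subseteq> Xa 25 \<union> Xa 27" by (rule G1'[of 0 1]) simp_all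
      show ?thesis unfolding j c using g by (rule order.trans) (intro Un_least; rule sub; simp add: own_def)
    next
      assume j: "j = 8"
      have o: "own 28 = 8" "own 30 = 8" by (simp_all add: own_def)
      have c: "Cy 8 = cyc1 m k (T1 1) 0" by (simp add: Cy_def)
      have g: "cyc_arcs (cyc1 m k (T1 1) 0) \<subseteq> Xa 28 \<union> Xa 30" by (rule G1'[of 1 0]) simp_all
      show ?thesis unfolding j c using g by (rule order.trans) (intro Un_least; rule sub; simp add: own_def)
    next
      assume j: "j = 9"
      have o: "own 29 = 9" "own 31 = 9" by (simp_all add: own_def)
      have c: "Cy 9 = cyc1 m k (T1 1) 1" by (simp add: Cy_def)
      have g: "cyc_arcs (cyc1 m k (T1 1) 1) \<subseteq> Xa 29 \<union> Xa 31" by (rule G1'[of 1 1]) simp_all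
      show ?thesis unfolding j c using g by (rule order.trans) (intro Un_least; rule sub; simp add: own_def)
    qed
  qed
  show ?thesis
  proof (rule assemble[of m Cy])
    show "4 \<le> m" using mm by simp
    show "dicycle m (Cy j)" if "j < 10" for j
    proof (cases "j < 6")
      case True then show ?thesis using type2_facts(5)[OF F2 mm] by (simp add: Cy_def)
    next
      case False then show ?thesis using type1_facts(5)[OF F1 mm] that by (simp add: Cy_def)
    qed
    show "set (Cy (2*i)) \<inter> set (Cy (2*i+1)) = {}" if "i < 5" for i
    proof (cases "i < 3")
      case True
      have "Cy (2*i) = cyc2 m k (T2 i) 0" "Cy (2*i+1) = cyc2 m k (T2 i) 1" using True by (simp_all add: Cy_def)
      then show ?thesis using type2_facts(7)[OF F2[OF True] mm] by simp
    next
      case False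
      then have i: "i - 3 < 2" using that by simp
      have a: "\<not> 2*i < 6" "\<not> 2*i+1 < 6" "(2*i-6) div 2 = i-3" "(2*i+1-6) div 2 = i-3" "(2*i+1-6) mod 2 = 1" "(2*i-6) mod 2 = 0"
        using False by presburger+
      have "Cy (2*i) = cyc1 m k (T1 (i-3)) 0" "Cy (2*i+1) = cyc1 m k (T1 (i-3)) 1"
        unfolding Cy_def using a by (simp_all only: if_False)
      then show ?thesis using type1_facts(7)[OF F1[OF i] mm] by simp
    qed
    show "cyc_arcs (Cy j) \<inter> cyc_arcs (Cy j') = {}" if jj: "j < 10" "j' < 10" "j \<noteq> j'" for j j'
    proof (rule ccontr)
      assume "\<not> ?thesis"
      then obtain e where "e \<in> cyc_arcs (Cy j)" "e \<in> cyc_arcs (Cy j')" by auto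
      then obtain l l' where "l < 32" "own l = j" "e \<in> Xa l" "l' < 32" "own l' = j'" "e \<in> Xa l'"
        using AX[OF jj(1)] AX[OF jj(2)] by blast
      then show False using XD jj(3) by blast
    qed
  qed
qed


theorem mainTheorem7:
  fixes p k m :: nat
  assumes "p \<in> {11, 13, 17, 19}"
    and "m = p + 12 * k"
    and "\<exists>T2 T1 :: nat \<Rightarrow> vtx list list.
           (\<forall>i<3. type2_basic m p k (T2 i)) \<and> (\<forall>i<2. type1_basic m p k (T1 i)) \<and>
           (let L = concat (map T2 [0..<3]) @ concat (map T1 [0..<2]) in
              \<forall>i<length L. \<forall>j<length L. i \<noteq> j \<longrightarrow> walk_arcs (L ! i) \<inter> walk_arcs (L ! j) = {})"
  shows "Cm_factorization m"
proof -
  obtain T2 T1 :: "nat \<Rightarrow> vtx list list" where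
    h2: "\<forall>i<3. type2_basic m p k (T2 i)" and h1: "\<forall>i<2. type1_basic m p k (T1 i)" and
    hL: "let L = concat (map T2 [0..<3]) @ concat (map T1 [0..<2]) in
              \<forall>i<length L. \<forall>j<length L. i \<noteq> j \<longrightarrow> walk_arcs (L ! i) \<inter> walk_arcs (L ! j) = {}"
    using assms(3) by blast
  have eq: "concat (map T2 [0..<3]) @ concat (map T1 [0..<2]) = T2 0 @ T2 1 @ T2 2 @ T1 0 @ T1 1"
    by (simp add: numeral_3_eq_3 numeral_2_eq_2)
  have p: "11 \<le> p" using assms(1) by auto
  show ?thesis
    by (rule main[OF p assms(2) h2 h1 _ refl]) (use hL eq in \<open>simp add: Let_def\<close>)
qed

end
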